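(* Let $m>0$ and let $\chi\in C_c^\infty(\mathbb R)$ be even with $\chi(z)=1$ for $|z|<z_0$, $\chi(z)=0$ for $|z|>2z_0$, $z_0\ll1$. Suppose $\mathcal E$ is twice differentiable on $(0,2z_0)$ with $|\partial_z^j\mathcal E(z)|\lesssim|\partial_z^j(\log z)^{-2}|$ for $j=0,1,2$ and $0<z<2z_0$. Then for $t>2$, $$\Big|\int_0^\infty e^{-it\sqrt{z^2+m^2}}\frac{z\chi(z)}{\sqrt{z^2+m^2}}\mathcal E(z)\,dz\Big|\lesssim\frac1{t\log^2t}.$$ *)

theory Defs
  imports "HOL-Analysis.Analysis"
begin

end

theory Submission imports Defs begin

lemma ibp:
  fixes w p p' F :: "real \<Rightarrow> complex"
  assumes ab: "a \<le> b" and t: "t > 0"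
  and cU: "continuous_on {a..b} (\<lambda>z. w z * p z)"
  and dU: "\<forall>z\<in>{a<..<b}. ((\<lambda>z. w z * p z) has_vector_derivative (-(\<i> * of_real t) * F z + w z * p' z)) (at z)"
  and iF: "F integrable_on {a..b}"
  shows "(\<lambda>z. w z * p' z) integrable_on {a..b} \<and> norm (integral {a..b} F) \<le> (norm (w b * p b) + norm (w a * p a) + norm (integral {a..b} (\<lambda>z. w z * p' z))) / t"
proof -
  have h1: "((\<lambda>z. -(\<i> * of_real t) * F z + w z * p' z) has_integral (w b * p b - w a * p a)) {a..b}"
    by (rule fundamental_theorem_of_calculus_interior[OF ab cU]) (use dU in auto)
  have h2: "((\<lambda>z. (\<i> * of_real t) * F z) has_integral ((\<i> * of_real t) * integral {a..b} F)) {a..b}"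
    using iF by (intro has_integral_mult_right) (simp add: integrable_integral)
  have h3: "((\<lambda>z. w z * p' z) has_integral ((w b * p b - w a * p a) + (\<i> * of_real t) * integral {a..b} F)) {a..b}"
    using has_integral_add[OF h1 h2] by (simp add: algebra_simps)
  define J where "J = integral {a..b} (\<lambda>z. w z * p' z)"
  have J: "J = (w b * p b - w a * p a) + (\<i> * of_real t) * integral {a..b} F"
    using h3 J_def integral_unique by blast
  have "integral {a..b} F = (J - w b * p b + w a * p a) / (\<i> * of_real t)"
    using J t by (simp add: field_simps)
  hence "norm (integral {a..b} F) = norm (J - w b * p b + w a * p a) / t"
    using t by (simp add: norm_divide norm_mult)
  also have "\<dots> \<le> (norm (w b * p b) + norm (w a * p a) + norm J) / t"
    using t by (intro divide_right_mono)
      (smt (verit) norm_triangle_ineq norm_triangle_ineq4, simp)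
  finally show ?thesis using h3 J_def by blast
qed

lemma dP: fixes y :: real assumes "0<y" "y<1"
  shows "((\<lambda>y. inverse ((ln y)^2)) has_real_derivative (-2/(y*(ln y)^3))) (at y)"
proof -
  have "ln y \<noteq> 0" using assms by simp
  show ?thesis using assms \<open>ln y \<noteq> 0\<close>
    by (auto intro!: derivative_eq_intros simp: field_simps power2_eq_square power3_eq_cube)
qed

lemma deriv1: fixes y :: real assumes "0<y" "y<1"
  shows "deriv (\<lambda>y. inverse ((ln y)^2)) y = -2/(y*(ln y)^3)"
  using dP[OF assms] DERIV_imp_deriv by blast

lemma deriv2: fixes z :: real assumes "0<z" "z<1"
  shows "(deriv^^2) (\<lambda>y. inverse ((ln y)^2)) z = 2/(z^2*(ln z)^3) + 6/(z^2*(ln z)^4)"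
proof -
  have ev: "eventually (\<lambda>y. deriv (\<lambda>y. inverse ((ln y)^2)) y = -2/(y*(ln y)^3)) (nhds z)"
    using eventually_nhds_in_open[of "{0<..<1::real}" z] assms
    by (auto elim!: eventually_mono dest: deriv1)
  have "ln z \<noteq> 0" using assms by simp
  have "((\<lambda>y. -2/(y*(ln y)^3)) has_real_derivative (2/(z^2*(ln z)^3) + 6/(z^2*(ln z)^4))) (at z)"
    using assms \<open>ln z \<noteq> 0\<close>
    by (auto intro!: derivative_eq_intros simp: field_simps power2_eq_square power3_eq_cube eval_nat_numeral)
  moreover have "(deriv^^2) (\<lambda>y. inverse ((ln y)^2)) z = deriv (\<lambda>y. -2/(y*(ln y)^3)) z"
    using deriv_cong_ev[OF ev refl] by (simp add: eval_nat_numeral)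
  ultimately show ?thesis using DERIV_imp_deriv by metis
qed

lemma isCont_lr:
  fixes f :: "real \<Rightarrow> 'a::real_normed_vector"
  assumes "isCont f x"
  shows "(f \<longlongrightarrow> f x) (at_left x)" "(f \<longlongrightarrow> f x) (at_right x)"
  using assms filterlim_at_split[of f "nhds (f x)" x] by (auto simp: isCont_def)

lemma zero_at_end:
  fixes f :: "real \<Rightarrow> real"
  assumes "isCont f b" "\<forall>x>b. f x = 0"
  shows "f b = 0"
proof -
  have 1: "(f \<longlongrightarrow> f b) (at_right b)" using isCont_lr[OF assms(1)] by simp
  have "eventually (\<lambda>x. f x = 0) (at_right b)"
    using eventually_at_right_less[of b] assms(2) by (auto elim: eventually_mono)
  hence 2: "(f \<longlongrightarrow> 0) (at_right b)" by (simp add: tendsto_eventually)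
  show ?thesis using tendsto_unique[OF _ 1 2] by simp
qed

lemma bound_on:
  fixes f :: "real \<Rightarrow> real"
  assumes "\<forall>x. isCont f x"
  shows "\<exists>M\<ge>0. \<forall>x\<in>{a..b}. \<bar>f x\<bar> \<le> M"
proof -
  have "compact (f ` {a..b})"
    using assms by (intro compact_continuous_image continuous_at_imp_continuous_on) auto
  then obtain M where "\<forall>y\<in>f ` {a..b}. norm y \<le> M" using compact_imp_bounded bounded_iff by blast
  thus ?thesis by (intro exI[of _ "max M 0"]) auto
qed

lemma cont_closed:
  fixes f :: "real \<Rightarrow> 'a::real_normed_vector"
  assumes "a < b" "\<forall>z\<in>{a<..<b}. isCont f z"
    "(f \<longlongrightarrow> f a) (at_right a)" "(f \<longlongrightarrow> f b) (at_left b)"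
  shows "continuous_on {a..b} f"
  unfolding continuous_on_eq_continuous_within
proof
  fix x assume x: "x \<in> {a..b}"
  show "continuous (at x within {a..b}) f"
  proof (cases "x = a")
    case True thus ?thesis using assms by (simp add: continuous_within at_within_Icc_at_right)
  next
    case False
    show ?thesis
    proof (cases "x = b")
      case True thus ?thesis using assms by (simp add: continuous_within at_within_Icc_at_left)
    next
      case False
      with \<open>x \<noteq> a\<close> x have "x \<in> {a<..<b}" by auto
      thus ?thesis using assms(2) continuous_at_imp_continuous_within by blast
    qed
  qed
qed

lemma lim_end_zero:
  fixes f :: "real \<Rightarrow> 'a::real_normed_vector"
  assumes "a < b" "\<forall>z\<in>{a<..<b}. norm (f z) \<le> K1 * \<bar>c1 z\<bar> + K2 * \<bar>c2 z\<bar>"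
    "isCont c1 b" "isCont c2 b" "c1 b = 0" "c2 b = 0"
  shows "(f \<longlongrightarrow> 0) (at_left b)"
proof (rule Lim_null_comparison)
  show "eventually (\<lambda>z. norm (f z) \<le> K1 * \<bar>c1 z\<bar> + K2 * \<bar>c2 z\<bar>) (at_left b)"
    using eventually_at_left_real[OF assms(1)] assms(2) by (auto elim: eventually_mono)
  have "((\<lambda>z. K1 * \<bar>c1 z\<bar> + K2 * \<bar>c2 z\<bar>) \<longlongrightarrow> K1 * \<bar>c1 b\<bar> + K2 * \<bar>c2 b\<bar>) (at_left b)"
    using isCont_lr(1)[OF assms(3)] isCont_lr(1)[OF assms(4)] by (intro tendsto_intros)
  thus "((\<lambda>z. K1 * \<bar>c1 z\<bar> + K2 * \<bar>c2 z\<bar>) \<longlongrightarrow> 0) (at_left b)" using assms(5,6) by simp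
qed

lemma dphi: fixes m z :: real assumes "m > 0"
  shows "((\<lambda>z. sqrt(z\<^sup>2+m\<^sup>2)) has_real_derivative (z/sqrt(z\<^sup>2+m\<^sup>2))) (at z)"
proof -
  have "z\<^sup>2+m\<^sup>2 > 0" using assms by (simp add: add_nonneg_pos)
  thus ?thesis by (auto intro!: derivative_eq_intros simp: field_simps)
qed

lemma dw: fixes m z t :: real assumes "m > 0"
  shows "((\<lambda>z. exp(-\<i> * complex_of_real (t * sqrt(z\<^sup>2+m\<^sup>2)))) has_vector_derivative
     (-(\<i> * of_real t) * of_real (z/sqrt(z\<^sup>2+m\<^sup>2)) * exp(-\<i> * complex_of_real(t * sqrt(z\<^sup>2+m\<^sup>2))))) (at z)"
proof -
  have 1: "((\<lambda>z. complex_of_real (t * sqrt(z\<^sup>2+m\<^sup>2))) has_vector_derivative of_real (t * (z/sqrt(z\<^sup>2+m\<^sup>2)))) (at z)"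
    by (intro has_vector_derivative_of_real DERIV_cmult dphi assms)
  have 2: "((\<lambda>u. exp (-\<i> * u)) has_field_derivative (-\<i> * exp (-\<i> * complex_of_real (t * sqrt(z\<^sup>2+m\<^sup>2))))) (at (complex_of_real (t * sqrt(z\<^sup>2+m\<^sup>2))))"
    by (auto intro!: derivative_eq_intros)
  show ?thesis using field_vector_diff_chain_at[OF 1 2]
    by (simp add: o_def algebra_simps)
qed

lemma dratio: fixes m z :: real assumes "m > 0" "z > 0"
  shows "((\<lambda>z. sqrt(z\<^sup>2+m\<^sup>2) / z) has_real_derivative (- m\<^sup>2 / (sqrt(z\<^sup>2+m\<^sup>2) * z\<^sup>2))) (at z)"
proof -
  have p: "z\<^sup>2+m\<^sup>2 > 0" using assms by (simp add: add_nonneg_pos)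
  have "((\<lambda>z. sqrt(z\<^sup>2+m\<^sup>2) / z) has_real_derivative ((z/sqrt(z\<^sup>2+m\<^sup>2)) * z - sqrt(z\<^sup>2+m\<^sup>2) * 1) / (z*z)) (at z)"
    using assms by (intro DERIV_divide[OF dphi[OF assms(1)] DERIV_ident]) auto
  moreover have "((z/sqrt(z\<^sup>2+m\<^sup>2)) * z - sqrt(z\<^sup>2+m\<^sup>2) * 1) / (z*z) = - m\<^sup>2 / (sqrt(z\<^sup>2+m\<^sup>2) * z\<^sup>2)"
  proof -
    have s: "sqrt(z\<^sup>2+m\<^sup>2) * sqrt(z\<^sup>2+m\<^sup>2) = z\<^sup>2+m\<^sup>2" using p by simp
    have "sqrt(z\<^sup>2+m\<^sup>2) > 0" using p by simp
    thus ?thesis using assms s by (simp add: field_simps power2_eq_square)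
  qed
  ultimately show ?thesis by simp
qed
lemma rineq:
  fixes z L C :: real
  assumes "0<z" "z \<le> 1" "1 \<le> L" "z*L \<le> 1" "0 \<le> C"
  shows "C/L^2/z \<le> C/(z^3*L^3)" "(2*C/(z*L^3))/z \<le> 2*C/(z^3*L^3)"
    "(4*C/(z^2*L^3))/z = 4*C/(z^3*L^3)" "C/L^2/z^2 \<le> C/(z^3*L^3)"
    "(2*C/(z*L^3))/z^2 = 2*C/(z^3*L^3)" "C/L^2 \<le> C/(z*L^3)" "C/L^2 \<le> C"
proof -
  have L0: "L > 0" using assms by simp
  have a: "z^2*L \<le> 1"
  proof -
    have "z^2*L = z*(z*L)" by (simp add: power2_eq_square)
    also have "\<dots> \<le> 1" using assms mult_le_one[of z "z*L"] by simp
    finally show ?thesis .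
  qed
  show "C/L^2/z \<le> C/(z^3*L^3)"
  proof -
    have "C/L^2/z = (C/(z^3*L^3)) * (z^2*L)" using L0 assms by (simp add: field_simps eval_nat_numeral)
    also have "\<dots> \<le> C/(z^3*L^3)" using a assms L0 by (intro mult_left_le) (auto intro!: divide_nonneg_pos)
    finally show ?thesis .
  qed
  show "(2*C/(z*L^3))/z \<le> 2*C/(z^3*L^3)"
  proof -
    have "(2*C/(z*L^3))/z = (2*C/(z^3*L^3)) * z" using L0 assms by (simp add: field_simps eval_nat_numeral)
    also have "\<dots> \<le> 2*C/(z^3*L^3)" using assms L0 by (intro mult_left_le) (auto intro!: divide_nonneg_pos)
    finally show ?thesis .
  qed
  show "(4*C/(z^2*L^3))/z = 4*C/(z^3*L^3)" using L0 assms by (simp add: field_simps eval_nat_numeral)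
  show "C/L^2/z^2 \<le> C/(z^3*L^3)"
  proof -
    have "C/L^2/z^2 = (C/(z^3*L^3)) * (z*L)" using L0 assms by (simp add: field_simps eval_nat_numeral)
    also have "\<dots> \<le> C/(z^3*L^3)" using assms L0 by (intro mult_left_le) (auto intro!: divide_nonneg_pos)
    finally show ?thesis .
  qed
  show "(2*C/(z*L^3))/z^2 = 2*C/(z^3*L^3)" using L0 assms by (simp add: field_simps eval_nat_numeral)
  show "C/L^2 \<le> C/(z*L^3)"
  proof -
    have "C/L^2 = (C/(z*L^3)) * (z*L)" using L0 assms by (simp add: field_simps eval_nat_numeral)
    also have "\<dots> \<le> C/(z*L^3)" using assms L0 by (intro mult_left_le) (auto intro!: divide_nonneg_pos)
    finally show ?thesis .
  qed
  show "C/L^2 \<le> C"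
  proof -
    have "1 \<le> L^2" using assms by (simp add: one_le_power)
    thus ?thesis using assms divide_left_mono[of 1 "L^2" C] by simp
  qed
qed
lemma h1bound:
  fixes a1 a2 a3 n0 n1 n2 p z m Q Mc Mc1 Mc2 C0 :: real
  assumes "0 \<le> a1" "a1 \<le> Mc" "0 \<le> a2" "a2 \<le> Mc1" "0 \<le> a3" "a3 \<le> Mc2"
    "n0/z \<le> C0*Q" "n1/z \<le> 2*C0*Q" "n2/z \<le> 4*C0*Q" "n0/z^2 \<le> C0*Q" "n1/z^2 \<le> 2*C0*Q"
    "0 < z" "m \<le> p" "p \<le> 1+m" "0 < m" "0 \<le> n0" "0 \<le> n1" "0 \<le> n2"
  shows "(p/z)*(a1*n2 + a2*n1 + a2*n1 + a3*n0) + (m^2/(p*z^2))*(a1*n1 + a2*n0)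
     \<le> ((1+m)*(4*Mc + 4*Mc1 + Mc2)*C0 + m*(2*Mc + Mc1)*C0) * Q"
proof -
  have p0: "p > 0" using assms by linarith
  have CQ: "0 \<le> C0*Q" using assms by (smt (verit) divide_nonneg_pos)
  have e1: "(p/z)*(a1*n2 + a2*n1 + a2*n1 + a3*n0) = p*(a1*(n2/z) + 2*(a2*(n1/z)) + a3*(n0/z))"
    using assms by (simp add: field_simps)
  have i1: "a1*(n2/z) + 2*(a2*(n1/z)) + a3*(n0/z) \<le> Mc*(4*C0*Q) + 2*(Mc1*(2*C0*Q)) + Mc2*(C0*Q)"
    using assms CQ by (intro add_mono mult_mono mult_left_mono) (auto simp: divide_nonneg_pos)
  have i1': "p*(a1*(n2/z) + 2*(a2*(n1/z)) + a3*(n0/z)) \<le> (1+m)*(Mc*(4*C0*Q) + 2*(Mc1*(2*C0*Q)) + Mc2*(C0*Q))"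
    using assms i1 p0 by (intro mult_mono) (auto simp: divide_nonneg_pos)
  have e2: "(m^2/(p*z^2))*(a1*n1 + a2*n0) = (m^2/p)*(a1*(n1/z^2) + a2*(n0/z^2))"
    using assms p0 by (simp add: field_simps)
  have mp: "m^2/p \<le> m" using assms p0 by (simp add: divide_le_eq power2_eq_square mult_left_mono)
  have i2: "a1*(n1/z^2) + a2*(n0/z^2) \<le> Mc*(2*C0*Q) + Mc1*(C0*Q)"
    using assms CQ by (intro add_mono mult_mono) (auto simp: divide_nonneg_pos)
  have i2': "(m^2/p)*(a1*(n1/z^2) + a2*(n0/z^2)) \<le> m*(Mc*(2*C0*Q) + Mc1*(C0*Q))"
    using assms i2 p0 mp by (intro mult_mono) (auto simp: divide_nonneg_pos)
  have "(p/z)*(a1*n2 + a2*n1 + a2*n1 + a3*n0) + (m^2/(p*z^2))*(a1*n1 + a2*n0)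
      \<le> (1+m)*(Mc*(4*C0*Q) + 2*(Mc1*(2*C0*Q)) + Mc2*(C0*Q)) + m*(Mc*(2*C0*Q) + Mc1*(C0*Q))"
    unfolding e1 e2 using i1' i2' by linarith
  also have "\<dots> = ((1+m)*(4*Mc + 4*Mc1 + Mc2)*C0 + m*(2*Mc + Mc1)*C0) * Q"
    by (simp add: algebra_simps)
  finally show ?thesis .
qed
lemma dR: fixes z :: real assumes "0 < z" "z < 1"
  shows "((\<lambda>z. - (1/(z^2*(-ln z)^3))) has_real_derivative (2/(z^3*(-ln z)^3) - 3/(z^3*(-ln z)^4))) (at z)"
proof -
  have l: "ln z \<noteq> 0" using assms by simp
  show ?thesis using assms l
    by (auto intro!: derivative_eq_intros simp: field_simps eval_nat_numeral)
qed

lemma Rint: fixes a b :: real assumes "0<a" "a \<le> b" "b < 1"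
 shows "((\<lambda>z. 2/(z^3*(-ln z)^3) - 3/(z^3*(-ln z)^4)) has_integral (1/(a^2*(-ln a)^3) - 1/(b^2*(-ln b)^3))) {a..b}"
proof -
  have "((\<lambda>z. 2/(z^3*(-ln z)^3) - 3/(z^3*(-ln z)^4)) has_integral ((- (1/(b^2*(-ln b)^3))) - (- (1/(a^2*(-ln a)^3))))) {a..b}"
  proof (rule fundamental_theorem_of_calculus)
    show "a \<le> b" by fact
    fix x assume x: "x \<in> {a..b}"
    hence "0 < x" "x < 1" using assms by auto
    thus "((\<lambda>z. - (1/(z^2*(-ln z)^3))) has_vector_derivative (2/(x^3*(-ln x)^3) - 3/(x^3*(-ln x)^4))) (at x within {a..b})"
      using dR has_real_derivative_iff_has_vector_derivative has_vector_derivative_at_within by blast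
  qed
  thus ?thesis by simp
qed

lemma Qle: fixes z L :: real assumes "0<z" "3 \<le> L"
  shows "1/(z^3*L^3) \<le> 2/(z^3*L^3) - 3/(z^3*L^4)"
proof -
  have "3/(z^3*L^4) = (1/(z^3*L^3)) * (3/L)" using assms by (simp add: field_simps eval_nat_numeral)
  also have "\<dots> \<le> 1/(z^3*L^3)" using assms by (intro mult_left_le) (auto simp: divide_le_eq)
  finally show ?thesis by simp
qed
lemma dU: fixes m t z :: real and chi :: "real \<Rightarrow> real" and E :: "real \<Rightarrow> complex"
  assumes "m > 0" "(chi has_real_derivative c1) (at z)" "(E has_vector_derivative e1) (at z)"
  shows "((\<lambda>z. exp(-\<i> * complex_of_real (t * sqrt(z\<^sup>2+m\<^sup>2))) * (of_real(chi z) * E z)) has_vector_derivative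
   (-(\<i> * of_real t) * (exp(-\<i> * complex_of_real (t * sqrt(z\<^sup>2+m\<^sup>2))) * complex_of_real (z * chi z / sqrt (z\<^sup>2+m\<^sup>2)) * E z)
     + exp(-\<i> * complex_of_real (t * sqrt(z\<^sup>2+m\<^sup>2))) * (of_real(chi z) * e1 + of_real c1 * E z))) (at z)"
  apply (rule has_vector_derivative_eq_rhs[OF has_vector_derivative_mult[OF dw[OF assms(1)] has_vector_derivative_mult[OF has_vector_derivative_of_real[OF assms(2)] assms(3)]]])
  apply (simp add: algebra_simps)
  done

lemma dH: fixes m t z :: real and G1 :: "real \<Rightarrow> complex"
  assumes "m > 0" "z > 0" "(G1 has_vector_derivative g2) (at z)"
  shows "((\<lambda>z. exp(-\<i> * complex_of_real (t * sqrt(z\<^sup>2+m\<^sup>2))) * (of_real(sqrt(z\<^sup>2+m\<^sup>2)/z) * G1 z)) has_vector_derivative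
   (-(\<i> * of_real t) * (exp(-\<i> * complex_of_real (t * sqrt(z\<^sup>2+m\<^sup>2))) * G1 z)
     + exp(-\<i> * complex_of_real (t * sqrt(z\<^sup>2+m\<^sup>2))) * (of_real(sqrt(z\<^sup>2+m\<^sup>2)/z) * g2 + of_real(- m\<^sup>2/(sqrt(z\<^sup>2+m\<^sup>2)*z\<^sup>2)) * G1 z))) (at z)"
proof -
  have s: "sqrt(z\<^sup>2+m\<^sup>2) > 0" using assms by (simp add: add_nonneg_pos)
  have k: "complex_of_real (z / sqrt(z\<^sup>2+m\<^sup>2)) * complex_of_real (sqrt(z\<^sup>2+m\<^sup>2)/z) = 1"
    using s assms by (simp flip: of_real_mult)
  show ?thesis
    apply (rule has_vector_derivative_eq_rhs[OF has_vector_derivative_mult[OF dw[OF assms(1)] has_vector_derivative_mult[OF has_vector_derivative_of_real[OF dratio[OF assms(1,2)]] assms(3)]]])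
    using k by (simp add: algebra_simps)
qed
lemma main:
  fixes chi chi1 chi2 :: "real \<Rightarrow> real" and E E1 E2 :: "real \<Rightarrow> complex" and m b C0 :: real
  assumes b: "0 < b" "b < 1/30" and m: "0 < m"
  and dc: "\<forall>x. (chi has_real_derivative chi1 x) (at x)"
  and dc1: "\<forall>x. (chi1 has_real_derivative chi2 x) (at x)"
  and cc2: "\<forall>x. isCont chi2 x"
  and c0: "\<forall>x>b. chi x = 0"
  and dE: "\<forall>z\<in>{0<..<b}. (E has_vector_derivative E1 z) (at z) \<and> (E1 has_vector_derivative E2 z) (at z)"
  and bE: "\<forall>z\<in>{0<..<b}. norm (E z) \<le> C0 / (-ln z)^2 \<and> norm (E1 z) \<le> 2*C0 / (z * (-ln z)^3) \<and> norm (E2 z) \<le> 4*C0/(z^2*(-ln z)^3)"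
  and C0: "C0 \<ge> 0"
  shows "\<exists>C. \<forall>t>2. norm (integral {0..} (\<lambda>z. exp (- \<i> * complex_of_real (t * sqrt (z\<^sup>2 + m\<^sup>2))) * complex_of_real (z * chi z / sqrt (z\<^sup>2 + m\<^sup>2)) * E z)) \<le> C / (t * (ln t)\<^sup>2)"
proof -
  have cchi: "\<forall>x. isCont chi x" using dc DERIV_isCont by blast
  have cchi1: "\<forall>x. isCont chi1 x" using dc1 DERIV_isCont by blast
  have chib: "chi b = 0" using zero_at_end[where f=chi] cchi c0 by auto
  have chi1z: "\<forall>x>b. chi1 x = 0"
  proof (intro allI impI)
    fix x assume x: "x > b"
    have "((\<lambda>_. 0) has_real_derivative 0) (at x)" by simp
    hence "(chi has_real_derivative 0) (at x)"
      by (rule has_field_derivative_transform_within_open[of _ 0 x "{b<..}"]) (use x c0 in auto)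
    thus "chi1 x = 0" using dc DERIV_unique by blast
  qed
  have chi1b: "chi1 b = 0" using zero_at_end[where f=chi1] cchi1 chi1z by auto
  obtain Mc where Mc: "Mc \<ge> 0" "\<forall>x\<in>{0..b}. \<bar>chi x\<bar> \<le> Mc" using bound_on[OF cchi] by blast
  obtain Mc1 where Mc1: "Mc1 \<ge> 0" "\<forall>x\<in>{0..b}. \<bar>chi1 x\<bar> \<le> Mc1" using bound_on[OF cchi1] by blast
  obtain Mc2 where Mc2: "Mc2 \<ge> 0" "\<forall>x\<in>{0..b}. \<bar>chi2 x\<bar> \<le> Mc2" using bound_on[OF cc2] by blast
  have e3: "exp 3 < (30::real)"
  proof -
    have "exp (3::real) = exp 1 * exp 1 * exp 1" by (simp flip: exp_add)
    also have "\<dots> \<le> 3 * 3 * 3" using exp_le by (intro mult_mono) auto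
    finally show ?thesis by simp
  qed
  have zf: "z < 1 \<and> 3 < -ln z \<and> z * (-ln z) \<le> 1" if z: "z \<in> {0<..<b}" for z
  proof -
    have z0: "0 < z" "z < 1/30" using z b by auto
    have "exp (-3) > (1/30::real)" using e3 by (simp add: exp_minus field_simps)
    hence "z < exp (-3)" using z0 by simp
    hence "ln z < -3" using z0 by (metis ln_exp ln_less_cancel_iff exp_gt_zero)
    moreover have "-ln z \<le> 1/z - 1" using ln_le_minus_one[of "1/z"] z0 by (simp add: ln_div)
    hence "z * (-ln z) \<le> z * (1/z - 1)" using z0 by (intro mult_left_mono) auto
    hence "z * (-ln z) \<le> 1" using z0 by (simp add: algebra_simps)
    ultimately show ?thesis using z0 by simp
  qed
  have phim: "m \<le> sqrt(z^2+m^2)" for z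
    using real_sqrt_le_mono[of "m^2" "z^2+m^2"] m by simp
  have phiz: "\<bar>z\<bar> \<le> sqrt(z^2+m^2)" for z
    using real_sqrt_le_mono[of "z^2" "z^2+m^2"] by simp
  have phi1: "sqrt(z^2+m^2) \<le> 1 + m" if "0 \<le> z" "z \<le> 1" for z
  proof -
    have "z^2+m^2 \<le> (1+m)^2" using that m by (simp add: power2_eq_square algebra_simps) (smt (verit) mult_left_le_one_le mult_nonneg_nonneg)
    thus ?thesis using m real_sqrt_le_mono by fastforce
  qed
  have cE: "isCont E z" "isCont E1 z" if "z \<in> {0<..<b}" for z
    using dE that has_vector_derivative_continuous by blast+
  have nw: "norm (exp (- \<i> * complex_of_real y)) = 1" for y by simp
  have nE0: "norm (E z) \<le> C0" if "z \<in> {0<..<b}" for z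
  proof -
    have "1 \<le> -ln z" using zf[OF that] by simp
    hence "C0 / (-ln z)^2 \<le> C0" using rineq(7)[of z "-ln z" C0] zf[OF that] that C0 by auto
    thus ?thesis using bE that by (meson order_trans)
  qed
  define F where "F = (\<lambda>t z. exp (- \<i> * complex_of_real (t * sqrt (z\<^sup>2 + m\<^sup>2))) * complex_of_real (z * chi z / sqrt (z\<^sup>2 + m\<^sup>2)) * E z)"
  have sq0: "sqrt (z\<^sup>2 + m\<^sup>2) > 0" for z using phim[of z] m by linarith
  have nF: "norm (F t z) = (z * \<bar>chi z\<bar> / sqrt(z^2+m^2)) * norm (E z)" if "z \<ge> 0" for t z
    unfolding F_def norm_mult norm_of_real nw using that sq0[of z] by (simp add: abs_mult)
  have F0: "F t 0 = 0" for t by (simp add: F_def)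
  have Fb: "F t b = 0" for t by (simp add: F_def chib)
  have nFb: "norm (F t z) \<le> (Mc * C0 / m) * z" "norm (F t z) \<le> C0 * \<bar>chi z\<bar>" "norm (F t z) \<le> Mc * C0" if z: "z \<in> {0<..<b}" for t z
  proof -
    have z0: "z > 0" using z by simp
    have 1: "z * \<bar>chi z\<bar> / sqrt(z^2+m^2) \<le> z * Mc / m"
      using Mc z sq0[of z] phim[of z] m z0 by (intro frac_le mult_left_mono) auto
    have 2: "z * \<bar>chi z\<bar> / sqrt(z^2+m^2) \<le> \<bar>chi z\<bar>"
      using phiz[of z] sq0[of z] z0 mult_left_mono[of z "sqrt (z\<^sup>2 + m\<^sup>2)" "\<bar>chi z\<bar>"]
      by (simp add: divide_le_eq mult.commute)
    have 3: "0 \<le> z * \<bar>chi z\<bar> / sqrt(z^2+m^2)" using z0 sq0[of z] by simp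
    show "norm (F t z) \<le> (Mc * C0 / m) * z"
      unfolding nF[OF less_imp_le[OF z0]] using mult_mono'[OF 1 nE0[OF z] 3 norm_ge_zero] by (simp add: field_simps)
    show "norm (F t z) \<le> C0 * \<bar>chi z\<bar>"
      unfolding nF[OF less_imp_le[OF z0]] using mult_mono'[OF 2 nE0[OF z] 3 norm_ge_zero] by (simp add: field_simps)
    show "norm (F t z) \<le> Mc * C0"
      unfolding nF[OF less_imp_le[OF z0]] using mult_mono'[OF order_trans[OF 2] nE0[OF z] 3 norm_ge_zero] Mc z by auto
  qed
  have cF: "continuous_on {0..b} (F t)" for t
  proof (rule cont_closed)
    show "0 < b" using b by simp
    show "\<forall>z\<in>{0<..<b}. isCont (F t) z"
    proof
      fix z assume z: "z \<in> {0<..<b}"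
      have "sqrt (z\<^sup>2 + m\<^sup>2) \<noteq> 0" by (metis sq0 order_less_irrefl)
      thus "isCont (F t) z" unfolding F_def using cE[OF z] cchi m
        by (intro continuous_intros) auto
    qed
    show "(F t \<longlongrightarrow> F t 0) (at_right 0)" unfolding F0
    proof (rule Lim_null_comparison)
      show "\<forall>\<^sub>F z in at_right 0. norm (F t z) \<le> (Mc * C0 / m) * z"
        using eventually_at_right_real[OF b(1)] by (rule eventually_mono) (use nFb(1) in blast)
      show "((\<lambda>z. (Mc * C0 / m) * z) \<longlongrightarrow> 0) (at_right 0)"
        by (rule tendsto_eq_intros) (auto intro!: tendsto_eq_intros simp: tendsto_mono[OF at_le] intro: tendsto_ident_at)
    qed
    show "(F t \<longlongrightarrow> F t b) (at_left b)" unfolding Fb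
      by (rule lim_end_zero[of 0 b "F t" C0 chi 0 chi]) (use b nFb cchi chib in auto)
  qed
  have iF: "F t integrable_on {0..b}" for t using cF integrable_continuous_interval by blast
  have Ieq: "integral {0..} (F t) = integral {0..b} (F t)" for t
  proof -
    define G where "G = (\<lambda>x. if x \<in> {0..b} then F t x else 0)"
    have "(G has_integral integral {0..b} (F t)) {0..b}"
      using integrable_integral[OF iF[of t]] has_integral_cong[of "{0..b}" G "F t"] by (simp add: G_def)
    hence "(G has_integral integral {0..b} (F t)) {0..}"
      by (rule has_integral_on_superset) (auto simp: G_def)
    moreover have "G x = F t x" if "x \<in> {0..}" for x using that c0 by (auto simp: G_def F_def)
    ultimately have "(F t has_integral integral {0..b} (F t)) {0..}"
      using has_integral_cong[of "{0..}" G "F t"] by simp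
    thus ?thesis by (rule integral_unique)
  qed
  have small: "norm (integral {0..b} (F t)) \<le> Mc * C0 * b" for t
  proof -
    have hI: "(F t has_integral integral {0..b} (F t)) {0..b}" using iF by blast
    have bd: "norm (F t x) \<le> Mc * C0" if "x \<in> {0..b} - {}" for x
      using that nFb(3)[of x t] F0 Fb Mc C0 by (cases "x = 0 \<or> x = b") auto
    show ?thesis using has_integral_bound_real[OF _ finite.emptyI hI bd] Mc C0 b by simp
  qed
  define K2 where "K2 = (1+m)*(4*Mc + 4*Mc1 + Mc2)*C0 + m*(2*Mc + Mc1)*C0"
  define S where "S = Mc*C0/m + Mc*C0 + (1+m)*(Mc1 + 2*Mc)*C0 + K2"
  define T0 where "T0 = 1/b^2 + 2"
  have K20: "K2 \<ge> 0" unfolding K2_def using Mc Mc1 Mc2 C0 m by simp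
  have large: "norm (integral {0..b} (F t)) \<le> 4 * S / (t * (ln t)^2)" if t: "t > T0" for t
  proof -
    have t2: "t > 2"
    proof -
      have "0 \<le> 1/b^2" by simp
      thus ?thesis using t unfolding T0_def by linarith
    qed
    define \<delta> where "\<delta> = 1 / sqrt t"
    have d0: "0 < \<delta>" using t2 by (simp add: \<delta>_def)
    have db: "\<delta> < b"
    proof -
      have "1/b^2 < t" using t by (simp add: T0_def)
      hence "sqrt (1/b^2) < sqrt t" by simp
      hence "1/b < sqrt t" using b by (simp add: real_sqrt_divide)
      thus ?thesis using b t2 by (simp add: \<delta>_def divide_less_eq mult.commute)
    qed
    have dsq: "\<delta>^2 = 1/t" using t2 by (simp add: \<delta>_def power_divide)
    define L where "L = - ln \<delta>"
    have L: "L = ln t / 2" using t2 by (simp add: L_def \<delta>_def ln_div ln_sqrt)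
    have dI: "\<delta> \<in> {0<..<b}" using d0 db by simp
    have L3: "3 < L" "\<delta> * L \<le> 1" using zf[OF dI] by (auto simp: L_def)
    have Aest: "norm (integral {0..\<delta>} (F t)) \<le> Mc*C0/m / (t * L^2)"
    proof -
      have hI: "(F t has_integral integral {0..\<delta>} (F t)) {0..\<delta>}"
        using integrable_subinterval_real[OF iF[of t], of 0 \<delta>] db by (simp add: integrable_integral)
      have L0: "L > 0" using L3 by simp
      have bd: "norm (F t x) \<le> (\<delta>*Mc/m) * (C0/L^2)" if x: "x \<in> {0..\<delta>} - {}" for x
      proof (cases "x = 0")
        case True thus ?thesis using F0 Mc C0 d0 m by simp
      next
        case False
        hence x0: "0 < x" "x \<le> \<delta>" using x by auto
        hence xb: "x \<in> {0<..<b}" using db by simp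
        have 1: "x * \<bar>chi x\<bar> / sqrt(x^2+m^2) \<le> \<delta> * Mc / m"
          using Mc xb x0 sq0[of x] phim[of x] m by (intro frac_le mult_mono) auto
        have "L \<le> - ln x" using x0 by (simp add: L_def)
        hence "L^2 \<le> (- ln x)^2" using L0 by (intro power_mono) auto
        hence "C0/(- ln x)^2 \<le> C0/L^2" using C0 L0 by (intro divide_left_mono) (auto intro!: mult_pos_pos order.strict_trans2[OF _ \<open>L^2 \<le> (- ln x)^2\<close>])
        hence 2: "norm (E x) \<le> C0/L^2" using bE xb by (meson order_trans)
        have 3: "0 \<le> x * \<bar>chi x\<bar> / sqrt(x^2+m^2)" using x0 sq0[of x] by simp
        show ?thesis unfolding nF[OF less_imp_le[OF x0(1)]] by (rule mult_mono'[OF 1 2 3 norm_ge_zero])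
      qed
      have "0 \<le> (\<delta>*Mc/m) * (C0/L^2)" using d0 Mc m C0 by auto
      hence "norm (integral {0..\<delta>} (F t)) \<le> (\<delta>*Mc/m) * (C0/L^2) * \<delta>"
        using has_integral_bound_real[OF _ finite.emptyI hI bd] d0 by simp
      also have "\<dots> = (\<delta>^2) * (Mc*C0/m / L^2)" using d0 by (simp add: power2_eq_square)
      also have "\<dots> = Mc*C0/m / (t * L^2)" using dsq by simp
      finally show ?thesis .
    qed
    have IBest: "norm (integral {\<delta>..b} (F t)) \<le> (Mc*C0 + (1+m)*(Mc1 + 2*Mc)*C0 + K2) / (t * L^2)"
    proof -
      have tpos: "t > 0" using t2 by simp
      define w where "w = (\<lambda>z. exp (- \<i> * complex_of_real (t * sqrt (z\<^sup>2 + m\<^sup>2))))"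
      define g where "g = (\<lambda>z. complex_of_real (chi z) * E z)"
      define g1 where "g1 = (\<lambda>z. complex_of_real (chi z) * E1 z + complex_of_real (chi1 z) * E z)"
      define g2 where "g2 = (\<lambda>z. (complex_of_real (chi z) * E2 z + complex_of_real (chi1 z) * E1 z) + (complex_of_real (chi1 z) * E1 z + complex_of_real (chi2 z) * E z))"
      define h where "h = (\<lambda>z. complex_of_real (sqrt(z\<^sup>2+m\<^sup>2)/z) * g1 z)"
      define h1 where "h1 = (\<lambda>z. complex_of_real(sqrt(z\<^sup>2+m\<^sup>2)/z) * g2 z + complex_of_real(- m\<^sup>2/(sqrt(z\<^sup>2+m\<^sup>2)*z\<^sup>2)) * g1 z)"
      have nw1: "norm (w z) = 1" for z unfolding w_def by (rule nw)
      have dEz: "(E has_vector_derivative E1 z) (at z)" "(E1 has_vector_derivative E2 z) (at z)" if "z \<in> {0<..<b}" for z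
        using dE that by auto
      have dUa: "((\<lambda>z. w z * g z) has_vector_derivative (-(\<i> * of_real t) * F t z + w z * g1 z)) (at z)" if z: "z \<in> {0<..<b}" for z
        using dU[OF m dc[rule_format] dEz(1)[OF z], of t] by (simp add: w_def g_def g1_def F_def)
      have dg1: "(g1 has_vector_derivative g2 z) (at z)" if z: "z \<in> {0<..<b}" for z
        unfolding g1_def g2_def
        by (intro has_vector_derivative_add has_vector_derivative_mult has_vector_derivative_of_real dEz[OF z] dc[rule_format] dc1[rule_format])
      have dHa: "((\<lambda>z. w z * h z) has_vector_derivative (-(\<i> * of_real t) * (w z * g1 z) + w z * h1 z)) (at z)" if z: "z \<in> {0<..<b}" for z
      proof -
        have "z > 0" using z by simp
        thus ?thesis using dH[OF m _ dg1[OF z], of t] by (simp add: w_def h_def h1_def)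
      qed
      have sub: "z \<in> {0<..<b}" if "z \<in> {\<delta><..<b}" for z using that d0 by auto
      have nwg: "norm (w z * g z) = \<bar>chi z\<bar> * norm (E z)" for z by (simp add: g_def norm_mult nw1)
      have nwh: "norm (w z * h z) = (sqrt(z\<^sup>2+m\<^sup>2)/z) * norm (g1 z)" if "z > 0" for z
        unfolding h_def norm_mult nw1 norm_of_real using that sq0[of z] by simp
      have ng1: "norm (g1 z) \<le> \<bar>chi z\<bar> * norm (E1 z) + \<bar>chi1 z\<bar> * norm (E z)" for z
        unfolding g1_def by (rule order_trans[OF norm_triangle_ineq]) (simp add: norm_mult)
      have cU1: "continuous_on {\<delta>..b} (\<lambda>z. w z * g z)"
      proof (rule cont_closed)
        show "\<delta> < b" by fact
        show "\<forall>z\<in>{\<delta><..<b}. isCont (\<lambda>z. w z * g z) z" using dUa sub has_vector_derivative_continuous by blast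
        show "((\<lambda>z. w z * g z) \<longlongrightarrow> w \<delta> * g \<delta>) (at_right \<delta>)"
          using isCont_lr(2)[OF has_vector_derivative_continuous[OF dUa[OF dI]]] by simp
        have "((\<lambda>z. w z * g z) \<longlongrightarrow> 0) (at_left b)"
        proof (rule lim_end_zero[of \<delta> b _ C0 chi 0 chi])
          show "\<forall>z\<in>{\<delta><..<b}. norm (w z * g z) \<le> C0 * \<bar>chi z\<bar> + 0 * \<bar>chi z\<bar>"
          proof
            fix z assume z: "z \<in> {\<delta><..<b}"
            have "\<bar>chi z\<bar> * norm (E z) \<le> \<bar>chi z\<bar> * C0" using nE0[OF sub[OF z]] by (simp add: mult_left_mono)
            thus "norm (w z * g z) \<le> C0 * \<bar>chi z\<bar> + 0 * \<bar>chi z\<bar>" unfolding nwg by (simp add: mult.commute)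
          qed
        qed (use db cchi chib in auto)
        thus "((\<lambda>z. w z * g z) \<longlongrightarrow> w b * g b) (at_left b)" by (simp add: g_def chib)
      qed
      have cU2: "continuous_on {\<delta>..b} (\<lambda>z. w z * h z)"
      proof (rule cont_closed)
        show "\<delta> < b" by fact
        show "\<forall>z\<in>{\<delta><..<b}. isCont (\<lambda>z. w z * h z) z" using dHa sub has_vector_derivative_continuous by blast
        show "((\<lambda>z. w z * h z) \<longlongrightarrow> w \<delta> * h \<delta>) (at_right \<delta>)"
          using isCont_lr(2)[OF has_vector_derivative_continuous[OF dHa[OF dI]]] by simp
        have "((\<lambda>z. w z * h z) \<longlongrightarrow> 0) (at_left b)"
        proof (rule lim_end_zero[of \<delta> b _ "(1+m)/\<delta>*(2*C0/\<delta>)" chi "(1+m)/\<delta>*C0" chi1])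
          show "\<forall>z\<in>{\<delta><..<b}. norm (w z * h z) \<le> (1+m)/\<delta>*(2*C0/\<delta>) * \<bar>chi z\<bar> + (1+m)/\<delta>*C0 * \<bar>chi1 z\<bar>"
          proof
            fix z assume z: "z \<in> {\<delta><..<b}"
            have z0: "z > 0" "z \<ge> \<delta>" "z \<le> 1" using z d0 b by auto
            have "1 \<le> - ln z" using zf[OF sub[OF z]] by simp
            hence "1 \<le> (- ln z)^3" by (rule one_le_power)
            hence "\<delta> \<le> z * (- ln z)^3" using z0 by (smt (verit) mult_le_cancel_left1)
            moreover have "0 < (z * (- ln z)^3) * \<delta>"
              by (metis mult_pos_pos order_less_le_trans zero_less_one z0(1) d0 \<open>1 \<le> (- ln z)^3\<close>)
            ultimately have "2*C0/(z * (- ln z)^3) \<le> 2*C0/\<delta>" using C0 by (intro divide_left_mono) auto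
            hence e1: "norm (E1 z) \<le> 2*C0/\<delta>" using bE sub[OF z] by (meson order_trans)
            have "norm (g1 z) \<le> \<bar>chi z\<bar> * (2*C0/\<delta>) + \<bar>chi1 z\<bar> * C0"
              using ng1[of z] e1 nE0[OF sub[OF z]] by (smt (verit) abs_ge_zero mult_left_mono)
            moreover have "sqrt(z\<^sup>2+m\<^sup>2)/z \<le> (1+m)/\<delta>"
              using phi1[of z] z0 d0 m by (intro frac_le) auto
            moreover have "0 \<le> \<bar>chi z\<bar> * (2*C0/\<delta>) + \<bar>chi1 z\<bar> * C0" using C0 d0 by simp
            ultimately have "(sqrt(z\<^sup>2+m\<^sup>2)/z) * norm (g1 z) \<le> (1+m)/\<delta> * (\<bar>chi z\<bar> * (2*C0/\<delta>) + \<bar>chi1 z\<bar> * C0)"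
              using sq0[of z] z0 d0 m by (intro mult_mono) auto
            thus "norm (w z * h z) \<le> (1+m)/\<delta>*(2*C0/\<delta>) * \<bar>chi z\<bar> + (1+m)/\<delta>*C0 * \<bar>chi1 z\<bar>"
              unfolding nwh[OF z0(1)] by (simp add: algebra_simps)
          qed
        qed (use db cchi cchi1 chib chi1b in auto)
        thus "((\<lambda>z. w z * h z) \<longlongrightarrow> w b * h b) (at_left b)" by (simp add: h_def g1_def chib chi1b)
      qed
      have iFd: "F t integrable_on {\<delta>..b}"
        using integrable_subinterval_real[OF iF[of t], of \<delta> b] d0 by simp
      have dU1: "\<forall>z\<in>{\<delta><..<b}. ((\<lambda>z. w z * g z) has_vector_derivative (-(\<i> * of_real t) * F t z + w z * g1 z)) (at z)"
        using dUa sub by blast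
      have dH1: "\<forall>z\<in>{\<delta><..<b}. ((\<lambda>z. w z * h z) has_vector_derivative (-(\<i> * of_real t) * (w z * g1 z) + w z * h1 z)) (at z)"
        using dHa sub by blast
      note ibp1 = ibp[OF less_imp_le[OF db] tpos cU1 dU1 iFd]
      note ibp2 = ibp[OF less_imp_le[OF db] tpos cU2 dH1 conjunct1[OF ibp1]]
      have wb: "w b * g b = 0" "w b * h b = 0" by (simp_all add: g_def h_def g1_def chib chi1b)
      have B1: "norm (w \<delta> * g \<delta>) \<le> Mc*C0/L^2"
      proof -
        have "norm (E \<delta>) \<le> C0/L^2" using bE dI by (simp add: L_def)
        moreover have "\<bar>chi \<delta>\<bar> \<le> Mc" using Mc d0 db by simp
        ultimately have "\<bar>chi \<delta>\<bar> * norm (E \<delta>) \<le> Mc * (C0/L^2)" using C0 Mc by (intro mult_mono) auto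
        thus ?thesis unfolding nwg by simp
      qed
      have L1: "1 \<le> L" using L3 by simp
      have B2: "norm (w \<delta> * h \<delta>) \<le> (1+m)*(Mc1 + 2*Mc)*C0 * t / L^2"
      proof -
        have e1: "norm (E1 \<delta>) \<le> 2*C0/(\<delta>*L^3)" using bE dI by (simp add: L_def)
        have "norm (E \<delta>) \<le> C0/L^2" using bE dI by (simp add: L_def)
        also have "\<dots> \<le> C0/(\<delta>*L^3)" using rineq(6)[of \<delta> L C0] d0 db b L1 L3 C0 by simp
        finally have e0: "norm (E \<delta>) \<le> C0/(\<delta>*L^3)" .
        have c: "\<bar>chi \<delta>\<bar> \<le> Mc" "\<bar>chi1 \<delta>\<bar> \<le> Mc1" using Mc Mc1 d0 db by auto
        have q0: "0 \<le> C0/(\<delta>*L^3)" using C0 d0 L1 by simp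
        have "norm (g1 \<delta>) \<le> Mc * (2*C0/(\<delta>*L^3)) + Mc1 * (C0/(\<delta>*L^3))"
          using ng1[of \<delta>] mult_mono[OF c(1) e1] mult_mono[OF c(2) e0] Mc Mc1 q0 by simp
        also have "\<dots> = (2*Mc + Mc1)*C0/(\<delta>*L^3)" by (simp add: add_divide_distrib algebra_simps)
        finally have g: "norm (g1 \<delta>) \<le> (2*Mc + Mc1)*C0/(\<delta>*L^3)" .
        have p: "sqrt(\<delta>\<^sup>2+m\<^sup>2)/\<delta> \<le> (1+m)/\<delta>" using phi1[of \<delta>] d0 db b by (intro divide_right_mono) auto
        have "norm (w \<delta> * h \<delta>) \<le> (1+m)/\<delta> * ((2*Mc + Mc1)*C0/(\<delta>*L^3))"
          unfolding nwh[OF d0] using p g sq0[of \<delta>] d0 m by (intro mult_mono) auto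
        also have "\<dots> = (1+m)*(Mc1 + 2*Mc)*C0 / (\<delta>^2 * L^3)" by (simp add: field_simps power2_eq_square)
        also have "\<dots> = (1+m)*(Mc1 + 2*Mc)*C0 * t / L^3" using dsq by simp
        also have "\<dots> \<le> (1+m)*(Mc1 + 2*Mc)*C0 * t / L^2"
        proof (rule divide_left_mono)
          show "L^2 \<le> L^3" using L1 by (simp add: power_increasing)
          show "0 \<le> (1+m)*(Mc1 + 2*Mc)*C0 * t" using m Mc Mc1 C0 tpos by simp
          show "0 < L^3 * L^2" using L1 by simp
        qed
        finally show ?thesis .
      qed
      have hb: "norm (w z * h1 z) \<le> K2 * (2/(z^3*(-ln z)^3) - 3/(z^3*(-ln z)^4))" if z: "z \<in> {\<delta><..<b}" for z
      proof -
        have zb: "z \<in> {0<..<b}" using sub[OF z] .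
        define Lz where "Lz = - ln z"
        have z0: "0 < z" "z \<le> 1" "3 \<le> Lz" "1 \<le> Lz" "z * Lz \<le> 1" using zf[OF zb] zb by (auto simp: Lz_def)
        have nE: "norm (E z) \<le> C0/Lz^2" "norm (E1 z) \<le> 2*C0/(z*Lz^3)" "norm (E2 z) \<le> 4*C0/(z^2*Lz^3)"
          using bE zb by (auto simp: Lz_def)
        define Q where "Q = 1/(z^3*Lz^3)"
        have Cq: "C/(z^3*Lz^3) = C*Q" for C by (simp add: Q_def)
        have r: "C0/Lz^2/z \<le> C0/(z^3*Lz^3)" "(2*C0/(z*Lz^3))/z \<le> 2*C0/(z^3*Lz^3)"
          "(4*C0/(z^2*Lz^3))/z = 4*C0/(z^3*Lz^3)" "C0/Lz^2/z^2 \<le> C0/(z^3*Lz^3)"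
          "(2*C0/(z*Lz^3))/z^2 = 2*C0/(z^3*Lz^3)"
          using rineq[of z Lz C0] z0 C0 by auto
        have p0: "norm (E z)/z \<le> C0*Q" using divide_right_mono[OF nE(1), of z] r(1) z0 Cq by simp
        have p1: "norm (E1 z)/z \<le> 2*C0*Q" using divide_right_mono[OF nE(2), of z] r(2) z0 Cq[of "2*C0"] by simp
        have p2: "norm (E2 z)/z \<le> 4*C0*Q" using divide_right_mono[OF nE(3), of z] r(3) z0 Cq[of "4*C0"] by simp
        have p3: "norm (E z)/z^2 \<le> C0*Q" using divide_right_mono[OF nE(1), of "z^2"] r(4) z0 Cq by simp
        have p4: "norm (E1 z)/z^2 \<le> 2*C0*Q" using divide_right_mono[OF nE(2), of "z^2"] r(5) z0 Cq[of "2*C0"] by simp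
        have c: "\<bar>chi z\<bar> \<le> Mc" "\<bar>chi1 z\<bar> \<le> Mc1" "\<bar>chi2 z\<bar> \<le> Mc2" using Mc Mc1 Mc2 zb by auto
        have ng2: "norm (g2 z) \<le> \<bar>chi z\<bar> * norm (E2 z) + \<bar>chi1 z\<bar> * norm (E1 z) + \<bar>chi1 z\<bar> * norm (E1 z) + \<bar>chi2 z\<bar> * norm (E z)"
        proof -
          have "norm (g2 z) \<le> norm (complex_of_real (chi z) * E2 z + complex_of_real (chi1 z) * E1 z) + norm (complex_of_real (chi1 z) * E1 z + complex_of_real (chi2 z) * E z)"
            unfolding g2_def by (rule norm_triangle_ineq)
          also have "\<dots> \<le> (norm (complex_of_real (chi z) * E2 z) + norm (complex_of_real (chi1 z) * E1 z)) + (norm (complex_of_real (chi1 z) * E1 z) + norm (complex_of_real (chi2 z) * E z))"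
            by (intro add_mono norm_triangle_ineq)
          finally show ?thesis by (simp add: norm_mult)
        qed
        have sp: "0 < sqrt(z\<^sup>2+m\<^sup>2)" by (rule sq0)
        have nh1: "norm (h1 z) \<le> (sqrt(z\<^sup>2+m\<^sup>2)/z) * norm (g2 z) + (m\<^sup>2/(sqrt(z\<^sup>2+m\<^sup>2)*z\<^sup>2)) * norm (g1 z)"
        proof -
          have "norm (h1 z) \<le> norm (complex_of_real(sqrt(z\<^sup>2+m\<^sup>2)/z) * g2 z) + norm (complex_of_real(- m\<^sup>2/(sqrt(z\<^sup>2+m\<^sup>2)*z\<^sup>2)) * g1 z)"
            unfolding h1_def by (rule norm_triangle_ineq)
          also have "\<dots> = (sqrt(z\<^sup>2+m\<^sup>2)/z) * norm (g2 z) + (m\<^sup>2/(sqrt(z\<^sup>2+m\<^sup>2)*z\<^sup>2)) * norm (g1 z)"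
            unfolding norm_mult norm_of_real using sp z0 by simp
          finally show ?thesis .
        qed
        have "norm (h1 z) \<le> (sqrt(z\<^sup>2+m\<^sup>2)/z) * (\<bar>chi z\<bar> * norm (E2 z) + \<bar>chi1 z\<bar> * norm (E1 z) + \<bar>chi1 z\<bar> * norm (E1 z) + \<bar>chi2 z\<bar> * norm (E z))
            + (m\<^sup>2/(sqrt(z\<^sup>2+m\<^sup>2)*z\<^sup>2)) * (\<bar>chi z\<bar> * norm (E1 z) + \<bar>chi1 z\<bar> * norm (E z))"
          using nh1 mult_left_mono[OF ng2, of "sqrt(z\<^sup>2+m\<^sup>2)/z"] mult_left_mono[OF ng1[of z], of "m\<^sup>2/(sqrt(z\<^sup>2+m\<^sup>2)*z\<^sup>2)"] sp z0
          by simp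
        also have "\<dots> \<le> K2 * Q" unfolding K2_def
          by (rule h1bound) (use c p0 p1 p2 p3 p4 z0 phim[of z] phi1[of z] m in auto)
        also have "\<dots> \<le> K2 * (2/(z^3*(-ln z)^3) - 3/(z^3*(-ln z)^4))"
          unfolding Q_def Lz_def using Qle[of z "- ln z"] z0 K20 by (intro mult_left_mono) (auto simp: Lz_def)
        finally show ?thesis by (simp add: norm_mult nw1)
      qed
      have B3: "norm (integral {\<delta>..b} (\<lambda>z. w z * h1 z)) \<le> K2 * t / L^2"
      proof -
        define Qt where "Qt = (\<lambda>z::real. 2/(z^3*(-ln z)^3) - 3/(z^3*(-ln z)^4))"
        have b1: "b < 1" using b by simp
        have hQ: "(Qt has_integral (1/(\<delta>^2*(-ln \<delta>)^3) - 1/(b^2*(-ln b)^3))) {\<delta>..b}"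
          unfolding Qt_def by (rule Rint[OF d0 less_imp_le[OF db] b1])
        have hKQ: "((\<lambda>z. K2 * Qt z) has_integral (K2 * (1/(\<delta>^2*L^3) - 1/(b^2*(-ln b)^3)))) {\<delta><..<b}"
          using has_integral_mult_right[OF hQ, of K2] by (simp add: has_integral_Icc_iff_Ioo L_def)
        have iwh: "(\<lambda>z. w z * h1 z) integrable_on {\<delta><..<b}"
          using conjunct1[OF ibp2] integrable_on_open_interval_real by blast
        have "norm (integral {\<delta>..b} (\<lambda>z. w z * h1 z)) = norm (integral {\<delta><..<b} (\<lambda>z. w z * h1 z))"
          by (simp add: integral_open_interval_real)
        also have "\<dots> \<le> integral {\<delta><..<b} (\<lambda>z. K2 * Qt z)"
          by (rule integral_norm_bound_integral[OF iwh]) (use hKQ hb in \<open>auto simp: Qt_def\<close>)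
        also have "\<dots> = K2 * (1/(\<delta>^2*L^3) - 1/(b^2*(-ln b)^3))" using hKQ by (rule integral_unique)
        also have "\<dots> \<le> K2 * (1/(\<delta>^2*L^3))"
        proof -
          have "0 < - ln b" using b1 b by simp
          hence "0 < (-ln b)^3" by (rule zero_less_power)
          hence "0 < b^2*(-ln b)^3" using b by (intro mult_pos_pos) auto
          hence "0 \<le> 1/(b^2*(-ln b)^3)" by (intro less_imp_le divide_pos_pos zero_less_one)
          thus ?thesis using K20 by (intro mult_left_mono) auto
        qed
        also have "\<dots> = K2 * t / L^3" using dsq by simp
        also have "\<dots> \<le> K2 * t / L^2"
        proof (rule divide_left_mono)
          show "L^2 \<le> L^3" using L1 by (simp add: power_increasing)
          show "0 \<le> K2 * t" using K20 tpos by simp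
          show "0 < L^3 * L^2" using L1 by simp
        qed
        finally show ?thesis .
      qed
      have Ln0: "L \<noteq> 0" using L3 by simp
      have "norm (integral {\<delta>..b} (\<lambda>z. w z * g1 z)) \<le> (0 + (1+m)*(Mc1 + 2*Mc)*C0 * t / L^2 + K2 * t / L^2) / t"
        using conjunct2[OF ibp2] wb B2 B3 tpos by (smt (verit) divide_right_mono norm_zero)
      also have "\<dots> = ((1+m)*(Mc1 + 2*Mc)*C0 + K2) / L^2" using tpos Ln0 by (simp add: field_simps)
      finally have J1: "norm (integral {\<delta>..b} (\<lambda>z. w z * g1 z)) \<le> ((1+m)*(Mc1 + 2*Mc)*C0 + K2) / L^2" .
      have "norm (integral {\<delta>..b} (F t)) \<le> (0 + Mc*C0/L^2 + ((1+m)*(Mc1 + 2*Mc)*C0 + K2) / L^2) / t"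
        using conjunct2[OF ibp1] wb B1 J1 tpos by (smt (verit) divide_right_mono norm_zero)
      also have "\<dots> = (Mc*C0 + (1+m)*(Mc1 + 2*Mc)*C0 + K2) / (t * L^2)" using tpos Ln0 by (simp add: field_simps)
      finally show ?thesis .
    qed
    have "integral {0..b} (F t) = integral {0..\<delta>} (F t) + integral {\<delta>..b} (F t)"
      using Henstock_Kurzweil_Integration.integral_combine[OF less_imp_le[OF d0] less_imp_le[OF db] iF[of t]] by simp
    hence "norm (integral {0..b} (F t)) \<le> Mc*C0/m / (t * L^2) + (Mc*C0 + (1+m)*(Mc1 + 2*Mc)*C0 + K2) / (t * L^2)"
      using Aest IBest norm_triangle_ineq by (smt (verit))
    also have "\<dots> = S / (t * L^2)" by (simp add: S_def add_divide_distrib)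
    also have "\<dots> = 4 * S / (t * (ln t)^2)" by (simp add: L power_divide)
    finally show ?thesis .
  qed
  have S0: "S \<ge> 0" unfolding S_def using Mc Mc1 C0 m K20 by simp
  define C where "C = 4*S + Mc*C0*b * (T0 * (ln T0)^2)"
  show ?thesis
  proof (intro exI[of _ C] allI impI)
    fix t :: real assume t2: "t > 2"
    have lt: "ln t > 0" using t2 by simp
    have den: "t * (ln t)^2 > 0" using t2 lt by simp
    have eq: "integral {0..} (\<lambda>z. exp (- \<i> * complex_of_real (t * sqrt (z\<^sup>2 + m\<^sup>2))) * complex_of_real (z * chi z / sqrt (z\<^sup>2 + m\<^sup>2)) * E z) = integral {0..b} (F t)"
      using Ieq[of t] by (simp add: F_def)
    have B0: "0 \<le> Mc*C0*b" using Mc C0 b by simp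
    have T00: "0 \<le> T0 * (ln T0)^2"
    proof -
      have "0 \<le> 1/b^2" by simp
      hence "T0 \<ge> 2" unfolding T0_def by linarith
      thus ?thesis by simp
    qed
    show "norm (integral {0..} (\<lambda>z. exp (- \<i> * complex_of_real (t * sqrt (z\<^sup>2 + m\<^sup>2))) * complex_of_real (z * chi z / sqrt (z\<^sup>2 + m\<^sup>2)) * E z)) \<le> C / (t * (ln t)\<^sup>2)"
      unfolding eq
    proof (cases "t > T0")
      case True
      have "4 * S \<le> C" unfolding C_def using B0 T00 by simp
      hence "4 * S / (t * (ln t)^2) \<le> C / (t * (ln t)^2)" using den by (simp add: divide_right_mono)
      thus "norm (integral {0..b} (F t)) \<le> C / (t * (ln t)\<^sup>2)" using large[OF True] by simp
    next
      case False
      have "(ln t)^2 \<le> (ln T0)^2" using False lt t2 by (intro power_mono) auto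
      hence tl: "t * (ln t)^2 \<le> T0 * (ln T0)^2" using False t2 by (intro mult_mono) auto
      have "norm (integral {0..b} (F t)) \<le> Mc*C0*b" by (rule small)
      also have "\<dots> = Mc*C0*b * (t * (ln t)^2) / (t * (ln t)^2)" using den by (metis nonzero_mult_div_cancel_right less_irrefl)
      also have "\<dots> \<le> Mc*C0*b * (T0 * (ln T0)^2) / (t * (ln t)^2)"
        using den B0 tl by (intro divide_right_mono mult_left_mono) auto
      also have "\<dots> \<le> C / (t * (ln t)^2)" unfolding C_def using den S0 by (intro divide_right_mono) auto
      finally show "norm (integral {0..b} (F t)) \<le> C / (t * (ln t)\<^sup>2)" .
    qed
  qed
qed

lemma zfact: fixes z :: real assumes "0 < z" "z < 1/30" shows "3 < - ln z"
proof -
  have e3: "exp 3 < (30::real)"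
  proof -
    have "exp (3::real) = exp 1 * exp 1 * exp 1" by (simp flip: exp_add)
    also have "\<dots> \<le> 3 * 3 * 3" using exp_le by (intro mult_mono) auto
    finally show ?thesis by simp
  qed
  have "exp (-3) > (1/30::real)" using e3 by (simp add: exp_minus field_simps)
  hence "z < exp (-3)" using assms by simp
  hence "ln z < -3" using assms by (metis ln_exp ln_less_cancel_iff exp_gt_zero)
  thus ?thesis by simp
qed

lemma P2bound: fixes z C0 :: real assumes "0<z" "3 \<le> - ln z" "0 \<le> C0"
  shows "C0 * \<bar>2/(z^2*(ln z)^3) + 6/(z^2*(ln z)^4)\<bar> \<le> 4*C0/(z^2*(-ln z)^3)"
proof -
  define L where "L = - ln z"
  have L: "3 \<le> L" "ln z = - L" using assms by (auto simp: L_def)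
  have "2/(z^2*(ln z)^3) + 6/(z^2*(ln z)^4) = (6 - 2*L)/(z^2*L^4)"
    using L assms by (simp add: field_simps eval_nat_numeral)
  hence "\<bar>2/(z^2*(ln z)^3) + 6/(z^2*(ln z)^4)\<bar> = (2*L - 6)/(z^2*L^4)"
    using L assms by (simp add: abs_div abs_mult)
  also have "\<dots> \<le> 4/(z^2*L^3)"
  proof -
    have "(2*L - 6)/(z^2*L^4) = (4/(z^2*L^3)) * ((2*L-6)/(4*L))" using L assms by (simp add: field_simps eval_nat_numeral)
    also have "\<dots> \<le> 4/(z^2*L^3)" using L assms by (intro mult_left_le) (auto simp: divide_le_eq)
    finally show ?thesis .
  qed
  finally have "\<bar>2/(z^2*(ln z)^3) + 6/(z^2*(ln z)^4)\<bar> \<le> 4/(z^2*L^3)" .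
  hence "C0 * \<bar>2/(z^2*(ln z)^3) + 6/(z^2*(ln z)^4)\<bar> \<le> C0 * (4/(z^2*L^3))" using assms by (intro mult_left_mono) auto
  thus ?thesis by (simp add: L_def)
qed

theorem corollary4p3:
  "\<exists>z1::real>0. \<forall>z0 m::real. \<forall>chi::real \<Rightarrow> real. \<forall>Er::real \<Rightarrow> complex. \<forall>Er1 Er2 C0.
     0 < z0 \<and> z0 < z1 \<and> m > 0
     \<and> (\<forall>k x. ((deriv ^^ k) chi) differentiable (at x))
     \<and> (\<forall>x. chi (- x) = chi x)
     \<and> (\<forall>x. \<bar>x\<bar> < z0 \<longrightarrow> chi x = 1)
     \<and> (\<forall>x. \<bar>x\<bar> > 2 * z0 \<longrightarrow> chi x = 0)
     \<and> (\<forall>z\<in>{0<..<2*z0}. (Er has_vector_derivative Er1 z) (at z)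
                           \<and> (Er1 has_vector_derivative Er2 z) (at z))
     \<and> (\<forall>z\<in>{0<..<2*z0}.
            norm (Er z) \<le> C0 * \<bar>inverse ((ln z)\<^sup>2)\<bar>
          \<and> norm (Er1 z) \<le> C0 * \<bar>deriv (\<lambda>y. inverse ((ln y)\<^sup>2)) z\<bar>
          \<and> norm (Er2 z) \<le> C0 * \<bar>(deriv ^^ 2) (\<lambda>y. inverse ((ln y)\<^sup>2)) z\<bar>)
     \<longrightarrow> (\<exists>C. \<forall>t>2.
            norm (integral {0..} (\<lambda>z. exp (- \<i> * complex_of_real (t * sqrt (z\<^sup>2 + m\<^sup>2)))
                    * complex_of_real (z * chi z / sqrt (z\<^sup>2 + m\<^sup>2)) * Er z))
              \<le> C / (t * (ln t)\<^sup>2))"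
proof (rule exI[of _ "1/60"], intro conjI allI impI)
  show "(0::real) < 1/60" by simp
  fix z0 m :: real and chi :: "real \<Rightarrow> real" and Er Er1 Er2 :: "real \<Rightarrow> complex" and C0 :: real
  assume H: "0 < z0 \<and> z0 < 1/60 \<and> m > 0
     \<and> (\<forall>k x. ((deriv ^^ k) chi) differentiable (at x))
     \<and> (\<forall>x. chi (- x) = chi x)
     \<and> (\<forall>x. \<bar>x\<bar> < z0 \<longrightarrow> chi x = 1)
     \<and> (\<forall>x. \<bar>x\<bar> > 2 * z0 \<longrightarrow> chi x = 0)
     \<and> (\<forall>z\<in>{0<..<2*z0}. (Er has_vector_derivative Er1 z) (at z)
                           \<and> (Er1 has_vector_derivative Er2 z) (at z))
     \<and> (\<forall>z\<in>{0<..<2*z0}.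
            norm (Er z) \<le> C0 * \<bar>inverse ((ln z)\<^sup>2)\<bar>
          \<and> norm (Er1 z) \<le> C0 * \<bar>deriv (\<lambda>y. inverse ((ln y)\<^sup>2)) z\<bar>
          \<and> norm (Er2 z) \<le> C0 * \<bar>(deriv ^^ 2) (\<lambda>y. inverse ((ln y)\<^sup>2)) z\<bar>)"
  define b where "b = 2 * z0"
  have b: "0 < b" "b < 1/30" using H by (auto simp: b_def)
  have m: "0 < m" using H by simp
  have dif: "\<And>k x. ((deriv ^^ k) chi) differentiable (at x)" using H by blast
  have dc: "\<forall>x. (chi has_real_derivative deriv chi x) (at x)"
    using dif[of 0] by (simp add: DERIV_deriv_iff_real_differentiable)
  have dc1: "\<forall>x. (deriv chi has_real_derivative deriv (deriv chi) x) (at x)"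
    using dif[of 1] by (simp add: DERIV_deriv_iff_real_differentiable)
  have cc2: "\<forall>x. isCont (deriv (deriv chi)) x"
    using dif[of 2] by (simp add: differentiable_imp_continuous_within eval_nat_numeral)
  have c0: "\<forall>x>b. chi x = 0" using H b by (auto simp: b_def)
  have dE: "\<forall>z\<in>{0<..<b}. (Er has_vector_derivative Er1 z) (at z) \<and> (Er1 has_vector_derivative Er2 z) (at z)"
    using H by (simp add: b_def)
  have hb: "\<forall>z\<in>{0<..<b}. norm (Er z) \<le> C0 * \<bar>inverse ((ln z)\<^sup>2)\<bar>
          \<and> norm (Er1 z) \<le> C0 * \<bar>deriv (\<lambda>y. inverse ((ln y)\<^sup>2)) z\<bar>
          \<and> norm (Er2 z) \<le> C0 * \<bar>(deriv ^^ 2) (\<lambda>y. inverse ((ln y)\<^sup>2)) z\<bar>"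
    using H by (simp add: b_def)
  have C0: "C0 \<ge> 0"
  proof -
    have zi: "z0 \<in> {0<..<b}" using H by (auto simp: b_def)
    have "ln z0 \<noteq> 0" using H by simp
    hence "\<bar>inverse ((ln z0)\<^sup>2)\<bar> > 0" by simp
    moreover have "0 \<le> C0 * \<bar>inverse ((ln z0)\<^sup>2)\<bar>" using hb zi norm_ge_zero order_trans by blast
    ultimately show ?thesis by (simp add: zero_le_mult_iff)
  qed
  have bE: "\<forall>z\<in>{0<..<b}. norm (Er z) \<le> C0 / (-ln z)^2 \<and> norm (Er1 z) \<le> 2*C0 / (z * (-ln z)^3) \<and> norm (Er2 z) \<le> 4*C0/(z^2*(-ln z)^3)"
  proof
    fix z assume z: "z \<in> {0<..<b}"
    have z0: "0 < z" "z < 1" "z < 1/30" using z b by auto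
    have L3: "3 < - ln z" using zfact z0 by simp
    have "norm (Er z) \<le> C0 * \<bar>inverse ((ln z)\<^sup>2)\<bar>" using hb z by blast
    also have "\<dots> = C0 / (-ln z)^2" by (simp add: divide_inverse)
    finally have 1: "norm (Er z) \<le> C0 / (-ln z)^2" .
    have "norm (Er1 z) \<le> C0 * \<bar>deriv (\<lambda>y. inverse ((ln y)\<^sup>2)) z\<bar>" using hb z by blast
    also have "\<dots> = C0 * \<bar>-2/(z*(ln z)^3)\<bar>" using deriv1[OF z0(1,2)] by simp
    also have "\<dots> = 2*C0 / (z * (-ln z)^3)"
    proof -
      have "-2/(z*(ln z)^3) = 2/(z*(-ln z)^3)" by (simp add: field_simps)
      moreover have "0 < z * (-ln z)^3" using z0 L3 by (intro mult_pos_pos zero_less_power) auto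
      ultimately show ?thesis by simp
    qed
    finally have 2: "norm (Er1 z) \<le> 2*C0 / (z * (-ln z)^3)" .
    have "norm (Er2 z) \<le> C0 * \<bar>(deriv ^^ 2) (\<lambda>y. inverse ((ln y)\<^sup>2)) z\<bar>" using hb z by blast
    also have "\<dots> = C0 * \<bar>2/(z^2*(ln z)^3) + 6/(z^2*(ln z)^4)\<bar>" using deriv2[OF z0(1,2)] by simp
    also have "\<dots> \<le> 4*C0/(z^2*(-ln z)^3)" using P2bound[OF z0(1) _ C0] L3 by simp
    finally have 3: "norm (Er2 z) \<le> 4*C0/(z^2*(-ln z)^3)" .
    show "norm (Er z) \<le> C0 / (-ln z)^2 \<and> norm (Er1 z) \<le> 2*C0 / (z * (-ln z)^3) \<and> norm (Er2 z) \<le> 4*C0/(z^2*(-ln z)^3)"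
      using 1 2 3 by simp
  qed
  show "\<exists>C. \<forall>t>2. norm (integral {0..} (\<lambda>z. exp (- \<i> * complex_of_real (t * sqrt (z\<^sup>2 + m\<^sup>2)))
                    * complex_of_real (z * chi z / sqrt (z\<^sup>2 + m\<^sup>2)) * Er z))
              \<le> C / (t * (ln t)\<^sup>2)"
    by (rule main[OF b m dc dc1 cc2 c0 dE bE C0])
qed
end
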